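(* Let $n\ge 0$, $N=2n+1$, and let $(\mathcal X'_k)_{0\le k\le n}$ be the skeleton chain of the ternary coalescent started from the monodisperse configuration $(1,\dots,1)$ consisting of $N$ particles of mass $1$. Then the time-reversed chain $(\mathcal X'_{n-k})_{0\le k\le n}$ (which starts from the single particle $(N)$) is a Markov chain whose transition from time $l$ to time $l+1$ ($0\le l\le n-1$) is as follows: conditionally on the current state $\mathbf s=(s_1,\dots,s_{2l+1})$, (a) select an index $\iota\in\{1,\dots,2l+1\}$ with $\mathbb P(\iota=i)=\frac{s_i-1}{2(n-l)}$; (b) given $\iota=i$, split $s_i$ into three numbers according to the law $\mu_{s_i}$ and rank these three numbers together with the $s_m$, $m\ne i$, in decreasing order to obtain the next state. In particular, the reversed chain is the state chain of a ternary fragmentation process (particles split independently into three pieces, with rate and dislocation law depending only on the particle size).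
   Context: Let $\mathcal S^\downarrow$ be the set of nonincreasing sequences $s_1\ge s_2\ge\dots\ge 0$ with only finitely many nonzero terms; a sequence is identified with its nonzero entries ("particles"). For $\mathbf s\in\mathcal S^\downarrow$ and indices $i<j<k$ of nonzero entries, $\mathbf s^{i\oplus j\oplus k}$ denotes the sequence obtained by removing $s_i,s_j,s_k$ and inserting $s_i+s_j+s_k$, then reranking decreasingly. The ternary coalescent is the continuous-time Markov jump process on $\mathcal S^\downarrow$ with jump rates $q(\mathbf s,\cdot)=\sum_{1\le i<j<k,\ s_k>0}(s_i+s_j+s_k+3)\,\delta_{\mathbf s^{i\oplus j\oplus k}}$. Started from $N=2n+1$ particles, it makes exactly $n$ jumps; with $T_0=0$ and $T_k$ the time of the $k$-th coagulation, the skeleton chain is $\mathcal X'_k=\mathcal X(T_k)$, $0\le k\le n$. Let $H_{-1}=\inf\{m\ge1: S_m=-1\}$ be the first hitting time of $-1$ by simple symmetric random walk $S$ on $\mathbb Z$ started at $0$, and let $\xi_1,\xi_2,\xi_3$ be independent copies of $H_{-1}$. For odd $s\ge3$, $\mu_s$ is the probability law on multisets $\{\{r_1,r_2,r_3\}\}$ of odd positive integers with $r_1+r_2+r_3=s$ given by $\mu_s(R)=\mathbb P(\{\{\xi_1,\xi_2,\xi_3\}\}=R\mid \xi_1+\xi_2+\xi_3=s)$. *)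

theory Defs
  imports Complex_Main "HOL-Library.Multiset"
begin

text \<open>The event {H_{-1} = m} depends only on the first m steps, so
  P(H_{-1} = m) = #(step lists of length m first hitting -1 at time m) / 2^m.\<close>

definition walk_step :: "bool \<Rightarrow> int" where
  "walk_step b = (if b then 1 else -1)"

definition walk :: "bool list \<Rightarrow> nat \<Rightarrow> int" where
  "walk w k = (\<Sum>i<k. walk_step (w ! i))"

definition first_hits_minus_one_at :: "bool list \<Rightarrow> nat \<Rightarrow> bool" where
  "first_hits_minus_one_at w m \<longleftrightarrow>
     1 \<le> m \<and> walk w m = -1 \<and> (\<forall>k. 1 \<le> k \<and> k < m \<longrightarrow> walk w k \<noteq> -1)"

definition hit_prob :: "nat \<Rightarrow> real" where
  "hit_prob m = real (card {w. length w = m \<and> first_hits_minus_one_at w m}) / 2 ^ m"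

text \<open>mu s R = P({{xi1,xi2,xi3}} = R | xi1+xi2+xi3 = s), xi_i iid copies of H_{-1}.\<close>

definition mu :: "nat \<Rightarrow> nat multiset \<Rightarrow> real" where
  "mu s R =
     (\<Sum>(a,b,c) \<in> {(a,b,c). a \<le> s \<and> b \<le> s \<and> c \<le> s \<and> a + b + c = s \<and> mset [a,b,c] = R}.
        hit_prob a * hit_prob b * hit_prob c)
   / (\<Sum>(a,b,c) \<in> {(a,b,c). a \<le> s \<and> b \<le> s \<and> c \<le> s \<and> a + b + c = s}.
        hit_prob a * hit_prob b * hit_prob c)"

text \<open>A state (element of S-down, identified with its nonzero entries) is a finite
  multiset of positive masses; its ranked (nonincreasing) list is:\<close>

definition ranked :: "nat multiset \<Rightarrow> nat list" where
  "ranked M = rev (sorted_list_of_multiset M)"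

definition coalesce :: "nat list \<Rightarrow> nat \<Rightarrow> nat \<Rightarrow> nat \<Rightarrow> nat multiset" where
  "coalesce xs i j k = mset xs - {#xs ! i, xs ! j, xs ! k#} + {#xs ! i + xs ! j + xs ! k#}"

definition coal_rate :: "nat multiset \<Rightarrow> nat multiset \<Rightarrow> real" where
  "coal_rate M M' = (let xs = ranked M in
     \<Sum>(i,j,k) \<in> {(i,j,k). i < j \<and> j < k \<and> k < size M \<and> coalesce xs i j k = M'}.
        real (xs ! i + xs ! j + xs ! k + 3))"

definition coal_total_rate :: "nat multiset \<Rightarrow> real" where
  "coal_total_rate M = (let xs = ranked M in
     \<Sum>(i,j,k) \<in> {(i,j,k). i < j \<and> j < k \<and> k < size M}. real (xs ! i + xs ! j + xs ! k + 3))"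

definition coal_kernel :: "nat multiset \<Rightarrow> nat multiset \<Rightarrow> real" where
  "coal_kernel M M' = coal_rate M M' / coal_total_rate M"

definition frag_kernel :: "nat \<Rightarrow> nat \<Rightarrow> nat multiset \<Rightarrow> nat multiset \<Rightarrow> real" where
  "frag_kernel n l M M' = (let ys = ranked M in
     \<Sum>i < size M. ((real (ys ! i) - 1) / (2 * real (n - l))) *
        (\<Sum>R \<in> {R. M - {#ys ! i#} + R = M'}. mu (ys ! i) R))"

definition point_mass :: "'a \<Rightarrow> 'a \<Rightarrow> real" where
  "point_mass a x = (if x = a then 1 else 0)"

definition markov_path_prob ::
  "('a \<Rightarrow> real) \<Rightarrow> (nat \<Rightarrow> 'a \<Rightarrow> 'a \<Rightarrow> real) \<Rightarrow> 'a list \<Rightarrow> real" where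
  "markov_path_prob p0 K xs = p0 (xs ! 0) * (\<Prod>k < length xs - 1. K k (xs ! k) (xs ! Suc k))"

end

theory Submission
  imports Defs
begin



fun gg :: "nat \<Rightarrow> nat \<Rightarrow> nat" where
  "gg d 0 = (if d = 0 then 1 else 0)"
| "gg 0 (Suc m) = 0"
| "gg (Suc d) (Suc m) = gg (Suc (Suc d)) m + gg d m"

fun reach :: "nat \<Rightarrow> bool list \<Rightarrow> bool" where
  "reach d [] = (d = 0)"
| "reach 0 (b # w) = False"
| "reach (Suc d) (b # w) = reach (if b then Suc (Suc d) else d) w"

lemma walk_Cons0: "walk (b # w) 0 = 0"
  by (simp add: walk_def)

lemma walk_Cons_Suc: "walk (b # w) (Suc k) = walk_step b + walk w k"
  unfolding walk_def sum.lessThan_Suc_shift by simp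

lemma reach_walk:
  "reach d w \<longleftrightarrow> walk w (length w) = - int d \<and> (\<forall>k<length w. walk w k \<noteq> - int d)"
proof (induction w arbitrary: d)
  case Nil
  then show ?case by (simp add: walk_def)
next
  case (Cons b w)
  show ?case
  proof (cases d)
    case 0
    then show ?thesis by (auto simp: walk_Cons0)
  next
    case (Suc d')
    have "reach d (b # w) = reach (if b then Suc (Suc d') else d') w" using Suc by simp
    also have "\<dots> \<longleftrightarrow> walk w (length w) = - int (if b then Suc (Suc d') else d') \<and>
        (\<forall>k<length w. walk w k \<noteq> - int (if b then Suc (Suc d') else d'))" by (rule Cons.IH)
    also have "\<dots> \<longleftrightarrow> walk (b#w) (length (b#w)) = - int d \<and> (\<forall>k<length (b#w). walk (b#w) k \<noteq> - int d)"
      unfolding Suc by (auto simp: walk_Cons_Suc walk_Cons0 walk_step_def All_less_Suc2)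
    finally show ?thesis .
  qed
qed

lemma first_hits_reach:
  "length w = m \<Longrightarrow> first_hits_minus_one_at w m \<longleftrightarrow> reach 1 w"
proof -
  assume len: "length w = m"
  have w0: "walk w 0 = 0" by (simp add: walk_def)
  show ?thesis
  proof
    assume H: "first_hits_minus_one_at w m"
    have "\<forall>k<m. walk w k \<noteq> -1"
    proof (intro allI impI)
      fix k assume "k < m"
      then show "walk w k \<noteq> -1" using H w0 unfolding first_hits_minus_one_at_def
        by (cases "k = 0") auto
    qed
    then show "reach 1 w" using H len unfolding first_hits_minus_one_at_def reach_walk by simp
  next
    assume "reach 1 w"
    then have R: "walk w m = -1" "\<forall>k<m. walk w k \<noteq> -1" using len unfolding reach_walk by auto
    have "m \<noteq> 0"
    proof
      assume "m = 0" then show False using R(1) w0 by simp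
    qed
    then show "first_hits_minus_one_at w m" using R unfolding first_hits_minus_one_at_def by auto
  qed
qed

lemma card_reach: "card {w. length w = m \<and> reach d w} = gg d m"
proof (induction m arbitrary: d)
  case 0
  have "{w. length w = 0 \<and> reach d w} = (if d = 0 then {[]} else {})" by auto
  then show ?case by simp
next
  case (Suc m)
  show ?case
  proof (cases d)
    case 0
    have "{w. length w = Suc m \<and> reach 0 w} = {}" by (auto simp: length_Suc_conv)
    then have "card {w. length w = Suc m \<and> reach 0 w} = 0" by (simp only: card.empty)
    then show ?thesis using 0 by simp
  next
    case (Suc d')
    let ?A = "{w. length w = m \<and> reach (Suc (Suc d')) w}"
    let ?B = "{w. length w = m \<and> reach d' w}"
    have eq: "{w. length w = Suc m \<and> reach d w} = Cons True ` ?A \<union> Cons False ` ?B"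
      using Suc by (auto simp: length_Suc_conv image_iff split: if_splits)
    have fA: "finite ?A" by (rule finite_subset[OF _ finite_lists_length_eq[of "UNIV::bool set" m]]) auto
    have fB: "finite ?B" by (rule finite_subset[OF _ finite_lists_length_eq[of "UNIV::bool set" m]]) auto
    have "card (Cons True ` ?A \<union> Cons False ` ?B) = card (Cons True ` ?A) + card (Cons False ` ?B)"
      by (rule card_Un_disjoint) (use fA fB in auto)
    also have "\<dots> = card ?A + card ?B" by (simp add: card_image)
    finally show ?thesis using eq Suc Suc.IH by simp
  qed
qed

lemma hit_prob_gg: "hit_prob m = real (gg 1 m) / 2 ^ m"
proof -
  have "{w. length w = m \<and> first_hits_minus_one_at w m} = {w. length w = m \<and> reach 1 w}"
    using first_hits_reach by blast
  then show ?thesis unfolding hit_prob_def by (simp add: card_reach)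
qed

lemma gg0: "gg 0 i = (if i = 0 then 1 else 0)"
  by (cases i) auto

lemma gg_conv: "gg (d + e) m = (\<Sum>a\<le>m. gg d a * gg e (m - a))"
proof (induction m arbitrary: d)
  case 0
  then show ?case by (cases d) auto
next
  case (Suc m)
  show ?case
  proof (cases d)
    case 0
    have "(\<Sum>a\<le>Suc m. gg 0 a * gg e (Suc m - a)) = (\<Sum>a\<in>{0}. gg 0 a * gg e (Suc m - a))"
      by (rule sum.mono_neutral_right) (auto simp: gg0)
    then show ?thesis using 0 by simp
  next
    case (Suc d')
    have "(\<Sum>a\<le>Suc m. gg d a * gg e (Suc m - a)) = (\<Sum>a\<le>m. (gg (Suc (Suc d')) a + gg d' a) * gg e (m - a))"
      using Suc by (simp only: sum.atMost_Suc_shift) simp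
    also have "\<dots> = (\<Sum>a\<le>m. gg (Suc (Suc d')) a * gg e (m - a)) + (\<Sum>a\<le>m. gg d' a * gg e (m - a))"
      by (simp add: sum.distrib algebra_simps)
    also have "\<dots> = gg (Suc (Suc d') + e) m + gg (d' + e) m" using Suc.IH[of "Suc (Suc d')"] Suc.IH[of d'] by simp
    finally show ?thesis using Suc by simp
  qed
qed

lemma gg_support: "gg d m \<noteq> 0 \<Longrightarrow> \<exists>j. m = d + 2 * j"
proof (induction m arbitrary: d)
  case 0
  then show ?case by (cases d) auto
next
  case (Suc m)
  show ?case
  proof (cases d)
    case 0 then show ?thesis using Suc.prems by simp
  next
    case (Suc d')
    then have "gg (Suc (Suc d')) m \<noteq> 0 \<or> gg d' m \<noteq> 0" using Suc.prems by simp
    then show ?thesis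
    proof
      assume "gg (Suc (Suc d')) m \<noteq> 0"
      then obtain j where "m = Suc (Suc d') + 2 * j" using Suc.IH by blast
      then show ?thesis using Suc by (intro exI[of _ "Suc j"]) simp
    next
      assume "gg d' m \<noteq> 0"
      then obtain j where "m = d' + 2 * j" using Suc.IH by blast
      then show ?thesis using Suc by (intro exI[of _ j]) simp
    qed
  qed
qed

lemma binom_rel: "(M choose (Suc a)) * Suc a = (M choose a) * (M - a)"
proof (cases "a < M")
  case True
  then obtain b where M: "M = Suc (a + b)" by (metis add_Suc_right less_imp_Suc_add)
  show ?thesis using Suc_times_binomial_add[of a b] M by (simp add: mult.commute)
next
  case False
  then show ?thesis by simp
qed

lemma gg_closed: "m = d + 2 * j \<Longrightarrow> m * gg d m = d * (m choose j)"
proof (induction m arbitrary: d j)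
  case 0
  then show ?case by simp
next
  case (Suc m)
  show ?case
  proof (cases d)
    case 0 then show ?thesis by simp
  next
    case (Suc d')
    have m: "m = d' + 2 * j" using Suc.prems Suc by simp
    have h2: "m * gg d' m = d' * (m choose j)" using Suc.IH m by blast
    show ?thesis
    proof (cases "m = 0")
      case True
      then have "d' = 0" "j = 0" using m by auto
      then show ?thesis using True Suc by simp
    next
      case mpos: False
      have h1: "m * gg (Suc (Suc d')) m = (if j = 0 then 0 else (d' + 2) * (m choose (j - 1)))"
      proof (cases j)
        case 0
        have "gg (Suc (Suc d')) m = 0"
          using gg_support[of "Suc (Suc d')" m] m 0 by (metis add.right_neutral le_add1 mult_0_right not_less_eq_eq plus_1_eq_Suc add_Suc_shift trans_le_add1)
        then show ?thesis using 0 by simp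
      next
        case (Suc j')
        then have "m * gg (Suc (Suc d')) m = Suc (Suc d') * (m choose j')"
          using Suc.IH[of "Suc (Suc d')" j'] m by simp
        then show ?thesis using Suc by simp
      qed
      have key: "m * (Suc m * gg d (Suc m)) = m * (d * (Suc m choose j))"
      proof (cases j)
        case 0
        have g1: "gg d' m = 1" using h2 m 0 mpos by simp
        have g2: "gg (Suc (Suc d')) m = 0" using h1 0 mpos by simp
        have "gg d (Suc m) = 1" using g1 g2 \<open>d = Suc d'\<close> by simp
        then show ?thesis using 0 m \<open>d = Suc d'\<close> by simp
      next
        case (Suc j')
        have rel: "(m choose j) * j = (m choose j') * (m - j')"
          using binom_rel[of m j'] Suc by simp
        have mj: "m - j' = d' + j' + 2" using m Suc by simp
        have pas: "Suc m choose j = (m choose j) + (m choose j')" using Suc by simp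
        have gsum: "m * gg d (Suc m) = (d' + 2) * (m choose j') + d' * (m choose j)"
          using h1 h2 Suc \<open>d = Suc d'\<close> by (simp add: algebra_simps)
        have "m * (Suc m * gg d (Suc m)) = Suc m * ((d' + 2) * (m choose j') + d' * (m choose j))"
          using gsum by (metis mult.left_commute)
        also have "\<dots> = m * (d * (Suc m choose j))"
          using rel mj pas m Suc \<open>d = Suc d'\<close> by (simp add: algebra_simps)
        finally show ?thesis .
      qed
      then show ?thesis using mpos by simp
    qed
  qed
qed




lemma hp_odd: "hit_prob m \<noteq> 0 \<Longrightarrow> odd m"
  using gg_support[of 1 m] by (auto simp: hit_prob_gg)

lemma gg1_closed: "(2*j+1) * gg 1 (2*j+1) = (2*j+1) choose j"
  using gg_closed[of "2*j+1" 1 j] by simp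

lemma hp_pos: "odd m \<Longrightarrow> hit_prob m > 0"
proof -
  assume "odd m"
  then obtain j where m: "m = 2*j+1" using oddE by blast
  have "(2*j+1) choose j > 0" by simp
  then have "gg 1 m > 0" using gg1_closed[of j] m by (metis mult_0_right neq0_conv)
  then show ?thesis by (simp add: hit_prob_gg)
qed

lemma hp1: "hit_prob 1 = 1/2"
  by (simp add: hit_prob_gg)

definition Wd :: "nat \<Rightarrow> real" where
  "Wd y = (\<Sum>(a,b,c) \<in> {(a,b,c). a \<le> y \<and> b \<le> y \<and> c \<le> y \<and> a + b + c = y}.
        hit_prob a * hit_prob b * hit_prob c)"

lemma S3_sum:
  fixes y :: nat shows "(\<Sum>(a,b,c) \<in> {(a,b,c). a \<le> y \<and> b \<le> y \<and> c \<le> y \<and> a + b + c = y}. F a b c)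
   = (\<Sum>a\<le>y. \<Sum>b\<le>y-a. F a b (y - a - b))"
proof -
  have eq: "{(a,b,c). a \<le> y \<and> b \<le> y \<and> c \<le> y \<and> a + b + c = y}
     = (\<lambda>(a,b). (a,b,y-a-b)) ` (SIGMA a:{..y}. {..y-a})"
  proof (rule set_eqI, rule iffI)
    fix x assume "x \<in> {(a,b,c). a \<le> y \<and> b \<le> y \<and> c \<le> y \<and> a + b + c = y}"
    then obtain a b c where x: "x = (a,b,c)" "a + b + c = y" by auto
    show "x \<in> (\<lambda>(a,b). (a,b,y-a-b)) ` (SIGMA a:{..y}. {..y-a})"
    proof (rule image_eqI[of _ _ "(a,b)"])
      have "c = y - a - b" using x(2) by arith
      then show "x = (case (a, b) of (a, b) \<Rightarrow> (a, b, y - a - b))" using x(1) by simp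
      show "(a, b) \<in> (SIGMA a:{..y}. {..y - a})" using x(2) by auto
    qed
  qed auto
  have inj: "inj_on (\<lambda>(a,b). (a,b,y-a-b)) (SIGMA a:{..y}. {..y-a})"
    by (auto simp: inj_on_def)
  show ?thesis
    unfolding eq apply (subst sum.reindex[OF inj]) apply (subst sum.Sigma) by (auto simp: split_def)
qed

lemma Wd_gg: "Wd y = real (gg 3 y) / 2 ^ y"
proof -
  have "Wd y = (\<Sum>a\<le>y. \<Sum>b\<le>y-a. hit_prob a * hit_prob b * hit_prob (y - a - b))"
    unfolding Wd_def by (rule S3_sum)
  also have "\<dots> = (\<Sum>a\<le>y. \<Sum>b\<le>y-a. real (gg 1 a * gg 1 b * gg 1 (y - a - b)) / 2 ^ y)"
  proof (intro sum.cong refl)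
    fix a b assume "a \<in> {..y}" "b \<in> {..y-a}"
    then have "y = a + b + (y - a - b)" by auto
    then have "(2::real) ^ y = 2 ^ a * 2 ^ b * 2 ^ (y - a - b)" by (metis power_add)
    then show "hit_prob a * hit_prob b * hit_prob (y - a - b) = real (gg 1 a * gg 1 b * gg 1 (y - a - b)) / 2 ^ y"
      by (simp add: hit_prob_gg)
  qed
  also have "\<dots> = real (\<Sum>a\<le>y. \<Sum>b\<le>y-a. gg 1 a * gg 1 b * gg 1 (y - a - b)) / 2 ^ y"
    by (simp add: sum_divide_distrib)
  also have "(\<Sum>a\<le>y. \<Sum>b\<le>y-a. gg 1 a * gg 1 b * gg 1 (y - a - b)) = gg 3 y"
  proof -
    have "gg 3 y = gg (1 + 2) y" by (simp add: eval_nat_numeral)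
    also have "\<dots> = (\<Sum>a\<le>y. gg 1 a * gg 2 (y - a))" by (rule gg_conv)
    also have "\<dots> = (\<Sum>a\<le>y. \<Sum>b\<le>y-a. gg 1 a * gg 1 b * gg 1 (y - a - b))"
    proof (intro sum.cong refl)
      fix a
      have "gg 2 (y - a) = gg (1 + 1) (y - a)" by (simp add: eval_nat_numeral)
      also have "\<dots> = (\<Sum>b\<le>y-a. gg 1 b * gg 1 (y - a - b))" by (rule gg_conv)
      finally show "gg 1 a * gg 2 (y - a) = (\<Sum>b\<le>y-a. gg 1 a * gg 1 b * gg 1 (y - a - b))"
        by (simp add: sum_distrib_left mult.assoc)
    qed
    finally show ?thesis by simp
  qed
  finally show ?thesis .
qed

lemma Wd_pos: "odd y \<Longrightarrow> y \<ge> 3 \<Longrightarrow> Wd y > 0"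
proof -
  assume "odd y" "y \<ge> 3"
  then obtain j where y: "y = 3 + 2 * j" by (metis add.commute dvd_def le_Suc_ex odd_add odd_numeral dvd_add_left_iff oddE)
  have "y * gg 3 y = 3 * (y choose j)" using gg_closed[OF y] .
  moreover have "(y choose j) > 0" using y by simp
  ultimately have "gg 3 y > 0" by (cases "gg 3 y = 0") auto
  then show ?thesis by (simp add: Wd_gg)
qed

lemma Wd_rel: "odd y \<Longrightarrow> y \<ge> 3 \<Longrightarrow> (real y + 3) * Wd y = 3 * (real y - 1) * hit_prob y"
proof -
  assume "odd y" "y \<ge> 3"
  then obtain j where y: "y = 3 + 2 * j" by (metis add.commute dvd_def le_Suc_ex odd_add odd_numeral dvd_add_left_iff oddE)
  have g3: "y * gg 3 y = 3 * (y choose j)" using gg_closed[OF y] .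
  have g1: "y * gg 1 y = 1 * (y choose Suc j)" using gg_closed[of y 1 "Suc j"] y by simp
  have rel: "(y choose Suc j) * Suc j = (y choose j) * (y - j)" by (rule binom_rel)
  have "y * ((y + 3) * gg 3 y) = y * (3 * (y - 1) * gg 1 y)"
  proof -
    have "y * ((y + 3) * gg 3 y) = (y+3) * (3 * (y choose j))" using g3 by (metis mult.left_commute)
    also have "\<dots> = 3 * (y - 1) * (y choose Suc j)"
    proof -
      have "y - j = j + 3" "y + 3 = 2 * (j + 3)" "y - 1 = 2 * Suc j" using y by auto
      then show ?thesis using rel by (simp add: algebra_simps)
    qed
    also have "\<dots> = y * (3 * (y - 1) * gg 1 y)" by (metis g1 mult_1 mult.left_commute)
    finally show ?thesis .
  qed
  then have "(y + 3) * gg 3 y = 3 * (y - 1) * gg 1 y" using y by simp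
  then have "real ((y + 3) * gg 3 y) = real (3 * (y - 1) * gg 1 y)" by simp
  then have "(real y + 3) * real (gg 3 y) = 3 * (real y - 1) * real (gg 1 y)"
    using y by (simp add: of_nat_diff)
  then show ?thesis by (simp add: Wd_gg hit_prob_gg)
qed




lemma card_idx: "card {t. t < length xs \<and> xs ! t = v} = count (mset xs) v"
  by (simp add: count_mset count_list_eq_length_filter length_filter_conv_card eq_commute)

lemma sub3:
  assumes "i < length xs" "j < length xs" "k < length xs" "i \<noteq> j" "i \<noteq> k" "j \<noteq> k"
  shows "{#xs!i, xs!j, xs!k#} \<subseteq># mset xs"
  unfolding subseteq_mset_def
proof
  fix v
  let ?S = "{t. t < length xs \<and> xs ! t = v}"
  have "count {#xs!i, xs!j, xs!k#} v = card ({i,j,k} \<inter> ?S)"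
    using assms by (auto simp: Int_insert_left card_insert_if)
  also have "\<dots> \<le> card ?S" by (rule card_mono) auto
  finally show "count {#xs!i, xs!j, xs!k#} v \<le> count (mset xs) v" by (simp add: card_idx)
qed

lemma card6:
  fixes m :: nat
  assumes s1: "\<And>i j k. P i j k = P j i k" and s2: "\<And>i j k. P i j k = P i k j"
  shows "card {(i,j,k). i < m \<and> j < m \<and> k < m \<and> i \<noteq> j \<and> i \<noteq> k \<and> j \<noteq> k \<and> P i j k}
       = 6 * card {(i,j,k). i < j \<and> j < k \<and> k < m \<and> P i j k}"
proof -
  let ?I = "{(i,j,k). i < j \<and> j < k \<and> k < m \<and> P i j k}"
  define f1 where "f1 = (\<lambda>(i::nat,j::nat,k::nat). (i,j,k))"
  define f2 where "f2 = (\<lambda>(i::nat,j::nat,k::nat). (i,k,j))"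
  define f3 where "f3 = (\<lambda>(i::nat,j::nat,k::nat). (j,i,k))"
  define f4 where "f4 = (\<lambda>(i::nat,j::nat,k::nat). (j,k,i))"
  define f5 where "f5 = (\<lambda>(i::nat,j::nat,k::nat). (k,i,j))"
  define f6 where "f6 = (\<lambda>(i::nat,j::nat,k::nat). (k,j,i))"
  have P: "P i j k = P j i k" "P i j k = P i k j" "P i j k = P k j i" "P i j k = P j k i" "P i j k = P k i j" for i j k
    using s1 s2 by metis+
  have eq: "{(i,j,k). i < m \<and> j < m \<and> k < m \<and> i \<noteq> j \<and> i \<noteq> k \<and> j \<noteq> k \<and> P i j k}
     = f1 ` ?I \<union> f2 ` ?I \<union> f3 ` ?I \<union> f4 ` ?I \<union> f5 ` ?I \<union> f6 ` ?I" (is "?D = _")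
  proof (rule set_eqI, rule iffI)
    fix x assume "x \<in> ?D"
    then obtain i j k where x: "x = (i,j,k)" "i < m" "j < m" "k < m" "i \<noteq> j" "i \<noteq> k" "j \<noteq> k" "P i j k" by auto
    consider "i<j" "j<k" | "i<k" "k<j" | "j<i" "i<k" | "j<k" "k<i" | "k<i" "i<j" | "k<j" "j<i"
      using x by (metis linorder_neqE_nat)
    then show "x \<in> f1 ` ?I \<union> f2 ` ?I \<union> f3 ` ?I \<union> f4 ` ?I \<union> f5 ` ?I \<union> f6 ` ?I"
    proof cases
      case 1 then show ?thesis using x P by (intro UnI1) (auto simp: f1_def image_iff)
    next
      case 2 then have "x = f2 (i,k,j)" "(i,k,j) \<in> ?I" using x P by (auto simp: f2_def)
      then show ?thesis by blast
    next
      case 3 then have "x = f3 (j,i,k)" "(j,i,k) \<in> ?I" using x P by (auto simp: f3_def)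
      then show ?thesis by blast
    next
      case 4 then have "x = f5 (j,k,i)" "(j,k,i) \<in> ?I" using x P by (auto simp: f5_def)
      then show ?thesis by blast
    next
      case 5 then have "x = f4 (k,i,j)" "(k,i,j) \<in> ?I" using x P by (auto simp: f4_def)
      then show ?thesis by blast
    next
      case 6 then have "x = f6 (k,j,i)" "(k,j,i) \<in> ?I" using x P by (auto simp: f6_def)
      then show ?thesis by blast
    qed
  next
    fix x assume "x \<in> f1 ` ?I \<union> f2 ` ?I \<union> f3 ` ?I \<union> f4 ` ?I \<union> f5 ` ?I \<union> f6 ` ?I"
    then show "x \<in> ?D" using P
      unfolding f1_def f2_def f3_def f4_def f5_def f6_def by auto
  qed
  have fin: "finite ?I" by (rule finite_subset[of _ "{..<m} \<times> {..<m} \<times> {..<m}"]) auto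
  have inj: "inj_on f1 ?I" "inj_on f2 ?I" "inj_on f3 ?I" "inj_on f4 ?I" "inj_on f5 ?I" "inj_on f6 ?I"
    unfolding f1_def f2_def f3_def f4_def f5_def f6_def inj_on_def by auto
  have c: "card (f1 ` ?I) = card ?I" "card (f2 ` ?I) = card ?I" "card (f3 ` ?I) = card ?I"
    "card (f4 ` ?I) = card ?I" "card (f5 ` ?I) = card ?I" "card (f6 ` ?I) = card ?I"
    using inj by (simp_all add: card_image)
  have fi: "finite (f1 ` ?I)" "finite (f2 ` ?I)" "finite (f3 ` ?I)" "finite (f4 ` ?I)" "finite (f5 ` ?I)" "finite (f6 ` ?I)"
    using fin by auto
  have d12: "f1 ` ?I \<inter> f2 ` ?I = {}" unfolding f1_def f2_def by auto
  have d3: "(f1 ` ?I \<union> f2 ` ?I) \<inter> f3 ` ?I = {}" unfolding f1_def f2_def f3_def by auto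
  have d4: "(f1 ` ?I \<union> f2 ` ?I \<union> f3 ` ?I) \<inter> f4 ` ?I = {}" unfolding f1_def f2_def f3_def f4_def by auto
  have d5: "(f1 ` ?I \<union> f2 ` ?I \<union> f3 ` ?I \<union> f4 ` ?I) \<inter> f5 ` ?I = {}" unfolding f1_def f2_def f3_def f4_def f5_def by auto
  have d6: "(f1 ` ?I \<union> f2 ` ?I \<union> f3 ` ?I \<union> f4 ` ?I \<union> f5 ` ?I) \<inter> f6 ` ?I = {}" unfolding f1_def f2_def f3_def f4_def f5_def f6_def by auto
  have "card (f1 ` ?I \<union> f2 ` ?I) = 2 * card ?I"
    using card_Un_disjoint[OF fi(1,2) d12] c by simp
  moreover have "card (f1 ` ?I \<union> f2 ` ?I \<union> f3 ` ?I) = card (f1 ` ?I \<union> f2 ` ?I) + card ?I"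
    using card_Un_disjoint[OF _ fi(3) d3] fi c by simp
  moreover have "card (f1 ` ?I \<union> f2 ` ?I \<union> f3 ` ?I \<union> f4 ` ?I) = card (f1 ` ?I \<union> f2 ` ?I \<union> f3 ` ?I) + card ?I"
    using card_Un_disjoint[OF _ fi(4) d4] fi c by simp
  moreover have "card (f1 ` ?I \<union> f2 ` ?I \<union> f3 ` ?I \<union> f4 ` ?I \<union> f5 ` ?I) = card (f1 ` ?I \<union> f2 ` ?I \<union> f3 ` ?I \<union> f4 ` ?I) + card ?I"
    using card_Un_disjoint[OF _ fi(5) d5] fi c by simp
  moreover have "card (f1 ` ?I \<union> f2 ` ?I \<union> f3 ` ?I \<union> f4 ` ?I \<union> f5 ` ?I \<union> f6 ` ?I) = card (f1 ` ?I \<union> f2 ` ?I \<union> f3 ` ?I \<union> f4 ` ?I \<union> f5 ` ?I) + card ?I"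
    using card_Un_disjoint[OF _ fi(6) d6] fi c by simp
  ultimately show ?thesis unfolding eq by simp
qed




lemma card_OD:
  "card {(i,j,k). i < length xs \<and> j < length xs \<and> k < length xs \<and> i \<noteq> j \<and> i \<noteq> k \<and> j \<noteq> k
      \<and> xs!i = p \<and> xs!j = q \<and> xs!k = r}
   = count (mset xs) p * count (mset xs - {#p#}) q * count (mset xs - {#p#} - {#q#}) r"
proof -
  define I where "I v = {t. t < length xs \<and> xs ! t = v}" for v
  have fI: "finite (I v)" for v unfolding I_def by auto
  have cI: "card (I v) = count (mset xs) v" for v unfolding I_def by (rule card_idx)
  have eq: "{(i,j,k). i < length xs \<and> j < length xs \<and> k < length xs \<and> i \<noteq> j \<and> i \<noteq> k \<and> j \<noteq> k
      \<and> xs!i = p \<and> xs!j = q \<and> xs!k = r} = Sigma (I p) (\<lambda>i. Sigma (I q - {i}) (\<lambda>j. I r - {i,j}))"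
    unfolding I_def by auto
  have c2: "card (I q - {i}) = count (mset xs) q - (if p = q then 1 else 0)" if "i \<in> I p" for i
  proof -
    have "I q \<inter> {i} = (if p = q then {i} else {})" using that unfolding I_def by auto
    then show ?thesis using card_Diff_subset_Int[of "I q" "{i}"] cI by auto
  qed
  have c3: "card (I r - {i,j}) = count (mset xs) r - ((if p = r then 1 else 0) + (if q = r then 1 else 0))"
    if "i \<in> I p" "j \<in> I q - {i}" for i j
  proof -
    have "card (I r \<inter> {i,j}) = (if p = r then 1 else 0) + (if q = r then 1 else 0)"
    proof -
      have "I r \<inter> {i,j} = (if p = r then {i} else {}) \<union> (if q = r then {j} else {})"
        using that unfolding I_def by auto
      then show ?thesis using that by auto
    qed
    then show ?thesis using card_Diff_subset_Int[of "I r" "{i,j}"] cI by auto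
  qed
  have "card (Sigma (I p) (\<lambda>i. Sigma (I q - {i}) (\<lambda>j. I r - {i,j})))
      = (\<Sum>i\<in>I p. \<Sum>j\<in>I q - {i}. card (I r - {i,j}))"
    using fI by (simp add: card_SigmaI)
  also have "\<dots> = (\<Sum>i\<in>I p. \<Sum>j\<in>I q - {i}. count (mset xs) r - ((if p = r then 1 else 0) + (if q = r then 1 else 0)))"
    using c3 by (intro sum.cong refl) auto
  also have "\<dots> = (\<Sum>i\<in>I p. (count (mset xs) q - (if p = q then 1 else 0)) * (count (mset xs) r - ((if p = r then 1 else 0) + (if q = r then 1 else 0))))"
    using c2 by (intro sum.cong refl) auto
  also have "\<dots> = count (mset xs) p * ((count (mset xs) q - (if p = q then 1 else 0)) * (count (mset xs) r - ((if p = r then 1 else 0) + (if q = r then 1 else 0))))"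
    using cI by simp
  also have "\<dots> = count (mset xs) p * count (mset xs - {#p#}) q * count (mset xs - {#p#} - {#q#}) r"
    by (auto simp: diff_diff_add)
  finally show ?thesis using eq by simp
qed

definition Dm :: "nat multiset \<Rightarrow> nat" where
  "Dm M = (\<Prod>v\<in>set_mset M. fact (count M v))"

lemma Dm_pos: "Dm M > 0"
  unfolding Dm_def by (simp add: prod_pos)

lemma Dm_add: "Dm (add_mset y M) = Dm M * Suc (count M y)"
proof (cases "y \<in># M")
  case True
  have "Dm (add_mset y M) = fact (count (add_mset y M) y) * (\<Prod>v\<in>set_mset M - {y}. fact (count (add_mset y M) v))"
    unfolding Dm_def using True by (simp add: prod.remove insert_absorb)
  also have "(\<Prod>v\<in>set_mset M - {y}. fact (count (add_mset y M) v)) = (\<Prod>v\<in>set_mset M - {y}. fact (count M v))"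
    by (intro prod.cong refl) auto
  also have "Dm M = fact (count M y) * (\<Prod>v\<in>set_mset M - {y}. fact (count M v))"
    unfolding Dm_def using True by (simp add: prod.remove)
  ultimately show ?thesis by (simp add: algebra_simps)
next
  case False
  have "Dm (add_mset y M) = fact (count (add_mset y M) y) * (\<Prod>v\<in>set_mset M. fact (count (add_mset y M) v))"
    unfolding Dm_def using False by simp
  also have "(\<Prod>v\<in>set_mset M. fact (count (add_mset y M) v)) = Dm M"
    unfolding Dm_def using False by (intro prod.cong refl) auto
  finally show ?thesis using False by (simp add: not_in_iff)
qed

lemma Dm_rm: "y \<in># M \<Longrightarrow> Dm M = count M y * Dm (M - {#y#})"
  using Dm_add[of y "M - {#y#}"] by (simp add: insert_DiffM)

lemma PS_sum:
  fixes f :: "nat \<Rightarrow> real"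
  shows "(\<Sum>(i,j)\<in>{(i,j). i < j \<and> j < m}. f i + f j + c)
      = (real m - 1) * (\<Sum>i<m. f i) + c * (real m * (real m - 1) / 2)"
proof (induction m)
  case 0
  then show ?case by simp
next
  case (Suc m)
  have eq: "{(i,j). i < j \<and> j < Suc m} = {(i,j). i < j \<and> j < m} \<union> (\<lambda>i. (i,m)) ` {..<m}"
    by auto
  have fin: "finite {(i,j). i < j \<and> j < (m::nat)}"
    by (rule finite_subset[of _ "{..<m} \<times> {..<m}"]) auto
  have "(\<Sum>(i,j)\<in>{(i,j). i < j \<and> j < Suc m}. f i + f j + c)
     = (\<Sum>(i,j)\<in>{(i,j). i < j \<and> j < m}. f i + f j + c) + (\<Sum>(i,j)\<in>(\<lambda>i. (i,m)) ` {..<m}. f i + f j + c)"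
    unfolding eq by (rule sum.union_disjoint) (use fin in auto)
  also have "(\<Sum>(i,j)\<in>(\<lambda>i. (i,m)) ` {..<m}. f i + f j + c) = (\<Sum>i<m. f i + f m + c)"
    by (subst sum.reindex) (auto simp: inj_on_def)
  also have "\<dots> = (\<Sum>i<m. f i) + real m * (f m + c)"
    by (simp add: sum.distrib distrib_left)
  finally have "(\<Sum>(i,j)\<in>{(i,j). i < j \<and> j < Suc m}. f i + f j + c) =
     ((real m - 1) * (\<Sum>i<m. f i) + c * (real m * (real m - 1) / 2)) + ((\<Sum>i<m. f i) + real m * (f m + c))"
    using Suc.IH by simp
  then show ?case by (simp add: field_simps)
qed

lemma TS_sum:
  fixes f :: "nat \<Rightarrow> real"
  shows "(\<Sum>(i,j,k)\<in>{(i,j,k). i < j \<and> j < k \<and> k < m}. f i + f j + f k + c)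
      = ((real m - 1) * (real m - 2) / 2) * (\<Sum>i<m. f i) + c * (real m * (real m - 1) * (real m - 2) / 6)"
proof (induction m)
  case 0
  then show ?case by simp
next
  case (Suc m)
  have eq: "{(i,j,k). i < j \<and> j < k \<and> k < Suc m} = {(i,j,k). i < j \<and> j < k \<and> k < m} \<union> (\<lambda>(i,j). (i,j,m)) ` {(i,j). i < j \<and> j < m}"
    by (auto simp: image_iff less_Suc_eq)
  have fin: "finite {(i,j,k). i < j \<and> j < k \<and> k < (m::nat)}"
    by (rule finite_subset[of _ "{..<m} \<times> {..<m} \<times> {..<m}"]) auto
  have fin2: "finite {(i,j). i < j \<and> j < (m::nat)}"
    by (rule finite_subset[of _ "{..<m} \<times> {..<m}"]) auto
  have "(\<Sum>(i,j,k)\<in>{(i,j,k). i < j \<and> j < k \<and> k < Suc m}. f i + f j + f k + c)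
     = (\<Sum>(i,j,k)\<in>{(i,j,k). i < j \<and> j < k \<and> k < m}. f i + f j + f k + c)
       + (\<Sum>(i,j,k)\<in>(\<lambda>(i,j). (i,j,m)) ` {(i,j). i < j \<and> j < m}. f i + f j + f k + c)"
    unfolding eq by (rule sum.union_disjoint) (use fin fin2 in auto)
  also have "(\<Sum>(i,j,k)\<in>(\<lambda>(i,j). (i,j,m)) ` {(i,j). i < j \<and> j < m}. f i + f j + f k + c)
      = (\<Sum>(i,j)\<in>{(i,j). i < j \<and> j < m}. f i + f j + (f m + c))"
    by (subst sum.reindex) (auto simp: inj_on_def split_def add.assoc intro!: sum.cong)
  also have "\<dots> = (real m - 1) * (\<Sum>i<m. f i) + (f m + c) * (real m * (real m - 1) / 2)"
    by (rule PS_sum)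
  finally show ?case using Suc.IH by (simp add: algebra_simps add_divide_distrib diff_divide_distrib)
qed




lemma ranked_mset[simp]: "mset (ranked M) = M"
  by (simp add: ranked_def)

lemma ranked_length[simp]: "length (ranked M) = size M"
  by (metis ranked_mset size_mset)

lemma total_rate:
  "coal_total_rate M = ((real (size M) - 1) * (real (size M) - 2) / 2) * real (sum_mset M)
      + 3 * (real (size M) * (real (size M) - 1) * (real (size M) - 2) / 6)"
proof -
  let ?xs = "ranked M"
  have "coal_total_rate M = (\<Sum>(i,j,k)\<in>{(i,j,k). i < j \<and> j < k \<and> k < size M}.
          real (?xs!i) + real (?xs!j) + real (?xs!k) + 3)"
    unfolding coal_total_rate_def Let_def by (intro sum.cong refl) auto
  also have "\<dots> = ((real (size M) - 1) * (real (size M) - 2) / 2) * (\<Sum>i<size M. real (?xs!i))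
      + 3 * (real (size M) * (real (size M) - 1) * (real (size M) - 2) / 6)"
    by (rule TS_sum)
  also have "(\<Sum>i<size M. real (?xs!i)) = real (sum_mset M)"
  proof -
    have "sum_mset M = sum_list ?xs" by (metis ranked_mset sum_mset_sum_list)
    also have "\<dots> = (\<Sum>i<size M. ?xs!i)" by (simp add: sum_list_sum_nth atLeast0LessThan)
    finally show ?thesis by simp
  qed
  finally show ?thesis .
qed

lemma add_eq_gen:
  fixes s :: "nat multiset"
  assumes A: "A \<subseteq># s" and B: "B \<subseteq># s" and eq: "s - A + {#x#} = s - B + {#y#}"
  shows "add_mset x B = add_mset y A"
proof (rule multiset_eqI)
  fix v
  have e: "count (s - A + {#x#}) v = count (s - B + {#y#}) v" using eq by simp
  have "count A v \<le> count s v" "count B v \<le> count s v" using A B by (auto intro: mset_subset_eq_count)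
  then show "count (add_mset x B) v = count (add_mset y A) v" using e by auto
qed

lemma uniq3:
  fixes s :: "nat multiset"
  assumes pos: "\<forall>x\<in>#s. x > 0"
    and A: "{#a,b,c#} \<subseteq># s" and B: "{#p,q,r#} \<subseteq># s"
    and eq: "s - {#a,b,c#} + {#a+b+c#} = s - {#p,q,r#} + {#p+q+r#}"
  shows "{#a,b,c#} = {#p,q,r#}"
proof -
  have E: "add_mset (a+b+c) {#p,q,r#} = add_mset (p+q+r) {#a,b,c#}"
    by (rule add_eq_gen[OF A B eq])
  have pp: "p > 0" "q > 0" "r > 0" using B pos by (auto dest: mset_subset_eqD)
  show ?thesis
  proof (cases "a+b+c = p+q+r")
    case True
    then show ?thesis using E by simp
  next
    case False
    have "p+q+r \<in># add_mset (a+b+c) {#p,q,r#}" unfolding E by simp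
    then have "p+q+r \<in># {#p,q,r#}" using False by simp
    then show ?thesis using pp by auto
  qed
qed

lemma coal_rate_main:
  fixes s :: "nat multiset"
  assumes pos: "\<forall>x\<in>#s. x > 0" and T: "{#a,b,c#} \<subseteq># s"
  shows "coal_rate s (s - {#a,b,c#} + {#a+b+c#}) = real (a+b+c+3) *
     card {(i,j,k). i < j \<and> j < k \<and> k < size s \<and> {#ranked s!i, ranked s!j, ranked s!k#} = {#a,b,c#}}"
proof -
  let ?xs = "ranked s"
  have set_eq: "{(i,j,k). i < j \<and> j < k \<and> k < size s \<and> coalesce ?xs i j k = s - {#a,b,c#} + {#a+b+c#}}
      = {(i,j,k). i < j \<and> j < k \<and> k < size s \<and> {#?xs!i, ?xs!j, ?xs!k#} = {#a,b,c#}}"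
  proof -
   have key: "coalesce ?xs i j k = s - {#a,b,c#} + {#a+b+c#} \<longleftrightarrow> {#?xs!i, ?xs!j, ?xs!k#} = {#a,b,c#}"
     if ijk: "i < j" "j < k" "k < size s" for i j k
   proof -
    have sub: "{#?xs!i, ?xs!j, ?xs!k#} \<subseteq># s" using sub3[of i ?xs j k] ijk by simp
    show ?thesis
    proof -
      have "coalesce ?xs i j k = s - {#a,b,c#} + {#a+b+c#} \<longleftrightarrow> {#?xs!i, ?xs!j, ?xs!k#} = {#a,b,c#}"
      proof
        assume "coalesce ?xs i j k = s - {#a,b,c#} + {#a+b+c#}"
        then have "s - {#a,b,c#} + {#a+b+c#} = s - {#?xs!i, ?xs!j, ?xs!k#} + {#?xs!i + ?xs!j + ?xs!k#}"
          unfolding coalesce_def by simp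
        then show "{#?xs!i, ?xs!j, ?xs!k#} = {#a,b,c#}"
          using uniq3[OF pos T sub] by simp
      next
        assume H: "{#?xs!i, ?xs!j, ?xs!k#} = {#a,b,c#}"
        then have "sum_mset {#?xs!i, ?xs!j, ?xs!k#} = sum_mset {#a,b,c#}" by simp
        then have "?xs!i + ?xs!j + ?xs!k = a + b + c" by (simp add: add.assoc)
        then show "coalesce ?xs i j k = s - {#a,b,c#} + {#a+b+c#}"
          unfolding coalesce_def using H by simp
      qed
      then show ?thesis by simp
    qed
   qed
   show ?thesis using key by blast
  qed
  have val: "real (?xs!i + ?xs!j + ?xs!k + 3) = real (a+b+c+3)"
    if "(i,j,k) \<in> {(i,j,k). i < j \<and> j < k \<and> k < size s \<and> {#?xs!i, ?xs!j, ?xs!k#} = {#a,b,c#}}" for i j k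
  proof -
    have H: "{#?xs!i, ?xs!j, ?xs!k#} = {#a,b,c#}" using that by simp
    have "sum_mset {#?xs!i, ?xs!j, ?xs!k#} = sum_mset {#a,b,c#}" using H by simp
    then show ?thesis by (simp add: add.assoc)
  qed
  have "(\<Sum>(i,j,k)\<in>{(i,j,k). i < j \<and> j < k \<and> k < size s \<and> {#?xs!i, ?xs!j, ?xs!k#} = {#a,b,c#}}. real (?xs!i + ?xs!j + ?xs!k + 3))
     = (\<Sum>x\<in>{(i,j,k). i < j \<and> j < k \<and> k < size s \<and> {#?xs!i, ?xs!j, ?xs!k#} = {#a,b,c#}}. real (a+b+c+3))"
    by (rule sum.cong[OF refl]) (use val in auto)
  then show ?thesis
    unfolding coal_rate_def Let_def set_eq by simp
qed




definition NS :: "nat \<Rightarrow> nat multiset \<Rightarrow> (nat \<times> nat \<times> nat) set" where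
  "NS y T = {(p,q,r). p \<le> y \<and> q \<le> y \<and> r \<le> y \<and> p + q + r = y \<and> mset [p,q,r] = T}"

lemma NS_finite: "finite (NS y T)"
  unfolding NS_def by (rule finite_subset[of _ "{..y} \<times> {..y} \<times> {..y}"]) auto

lemma mu_main:
  assumes y: "y = a + b + c"
  shows "mu y {#a,b,c#} = real (card (NS y {#a,b,c#})) * (hit_prob a * hit_prob b * hit_prob c) / Wd y"
proof -
  have "(\<Sum>(p,q,r) \<in> NS y {#a,b,c#}. hit_prob p * hit_prob q * hit_prob r)
      = (\<Sum>x \<in> NS y {#a,b,c#}. hit_prob a * hit_prob b * hit_prob c)"
  proof (rule sum.cong[OF refl], clarify)
    fix p q r assume "(p,q,r) \<in> NS y {#a,b,c#}"
    then have "{#p,q,r#} = {#a,b,c#}" unfolding NS_def by simp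
    then have "prod_mset (image_mset hit_prob {#p,q,r#}) = prod_mset (image_mset hit_prob {#a,b,c#})" by simp
    then show "hit_prob p * hit_prob q * hit_prob r = hit_prob a * hit_prob b * hit_prob c"
      by (simp add: mult.assoc)
  qed
  then show ?thesis unfolding mu_def Wd_def NS_def[symmetric] by simp
qed

lemma msub3_diff: "(s::nat multiset) - {#p,q,r#} = s - {#p#} - {#q#} - {#r#}"
  by (rule multiset_eqI) (simp add: diff_diff_left)

lemma OD_Dm:
  assumes "{#p,q,r#} \<subseteq># s"
  shows "count s p * count (s - {#p#}) q * count (s - {#p#} - {#q#}) r * Dm (s - {#p,q,r#}) = Dm s"
proof -
  have m1: "p \<in># s" "add_mset q {#r#} \<subseteq># s - {#p#}"
    using assms insert_subset_eq_iff[of p "add_mset q {#r#}" s] by auto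
  have m2: "q \<in># s - {#p#}" "{#r#} \<subseteq># s - {#p#} - {#q#}"
    using m1(2) insert_subset_eq_iff[of q "{#r#}" "s - {#p#}"] by auto
  have m: "p \<in># s" "q \<in># s - {#p#}" "r \<in># s - {#p#} - {#q#}"
    using m1 m2 by auto
  have "Dm s = count s p * Dm (s - {#p#})" using Dm_rm[OF m(1)] .
  also have "Dm (s - {#p#}) = count (s - {#p#}) q * Dm (s - {#p#} - {#q#})" using Dm_rm[OF m(2)] .
  also have "Dm (s - {#p#} - {#q#}) = count (s - {#p#} - {#q#}) r * Dm (s - {#p#} - {#q#} - {#r#})"
    using Dm_rm[OF m(3)] .
  finally show ?thesis unfolding msub3_diff by (simp only: mult.assoc)
qed

lemma count_main:
  fixes s :: "nat multiset"
  assumes T: "{#a,b,c#} \<subseteq># s"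
  defines "xs \<equiv> ranked s"
  shows "6 * card {(i,j,k). i < j \<and> j < k \<and> k < size s \<and> {#xs!i, xs!j, xs!k#} = {#a,b,c#}}
           * Dm (s - {#a,b,c#}) = card (NS (a+b+c) {#a,b,c#}) * Dm s"
proof -
  let ?T = "{#a,b,c#}"
  let ?y = "a + b + c"
  let ?m = "length xs"
  have len: "?m = size s" unfolding xs_def by simp
  have ms: "mset xs = s" unfolding xs_def by simp
  define E where "E = (\<lambda>(p,q,r). {(i,j,k). i < ?m \<and> j < ?m \<and> k < ?m \<and> i \<noteq> j \<and> i \<noteq> k \<and> j \<noteq> k
      \<and> xs!i = p \<and> xs!j = q \<and> xs!k = r})"
  let ?D = "{(i,j,k). i < ?m \<and> j < ?m \<and> k < ?m \<and> i \<noteq> j \<and> i \<noteq> k \<and> j \<noteq> k \<and> {#xs!i, xs!j, xs!k#} = ?T}"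
  have c6: "card ?D = 6 * card {(i,j,k). i < j \<and> j < k \<and> k < ?m \<and> {#xs!i, xs!j, xs!k#} = ?T}"
    by (rule card6) (auto simp: add_mset_commute)
  have DU: "?D = (\<Union>x\<in>NS ?y ?T. E x)"
  proof (rule set_eqI, rule iffI)
    fix x assume "x \<in> ?D"
    then obtain i j k where x: "x = (i,j,k)" "i < ?m" "j < ?m" "k < ?m" "i \<noteq> j" "i \<noteq> k" "j \<noteq> k"
      "{#xs!i, xs!j, xs!k#} = ?T" by auto
    have "sum_mset {#xs!i, xs!j, xs!k#} = sum_mset ?T" using x(8) by simp
    then have sm: "xs!i + xs!j + xs!k = ?y" by (simp add: add.assoc)
    have "(xs!i, xs!j, xs!k) \<in> NS ?y ?T" unfolding NS_def using sm x(8) by auto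
    moreover have "x \<in> E (xs!i, xs!j, xs!k)" unfolding E_def using x by auto
    ultimately show "x \<in> (\<Union>x\<in>NS ?y ?T. E x)" by blast
  next
    fix x assume "x \<in> (\<Union>x\<in>NS ?y ?T. E x)"
    then show "x \<in> ?D" unfolding E_def NS_def by auto
  qed
  have finE: "finite (E x)" for x
    unfolding E_def by (cases x) (auto intro: finite_subset[of _ "{..<?m} \<times> {..<?m} \<times> {..<?m}"])
  have disj: "\<forall>x\<in>NS ?y ?T. \<forall>z\<in>NS ?y ?T. x \<noteq> z \<longrightarrow> E x \<inter> E z = {}"
  proof (intro ballI impI)
    fix x z :: "nat \<times> nat \<times> nat" assume "x \<noteq> z"
    moreover obtain p q r where x: "x = (p,q,r)" by (cases x)
    moreover obtain p' q' r' where z: "z = (p',q',r')" by (cases z)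
    ultimately show "E x \<inter> E z = {}" unfolding E_def by auto
  qed
  have cD: "card ?D = (\<Sum>x\<in>NS ?y ?T. card (E x))"
    unfolding DU using card_UN_disjoint[OF NS_finite _ disj] finE by blast
  have each: "card (E x) * Dm (s - ?T) = Dm s" if "x \<in> NS ?y ?T" for x
  proof -
    obtain p q r where x: "x = (p,q,r)" by (cases x)
    have pq: "{#p,q,r#} = ?T" using that x unfolding NS_def by simp
    have "card (E x) = count s p * count (s - {#p#}) q * count (s - {#p#} - {#q#}) r"
      unfolding x E_def using card_OD[of xs p q r] ms by simp
    then show ?thesis using OD_Dm[of p q r s] pq T by simp
  qed
  have "card ?D * Dm (s - ?T) = (\<Sum>x\<in>NS ?y ?T. card (E x) * Dm (s - ?T))"
    unfolding cD by (simp add: sum_distrib_right)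
  also have "\<dots> = (\<Sum>x\<in>NS ?y ?T. Dm s)" using each by (intro sum.cong refl) auto
  finally show ?thesis using c6 len by simp
qed

lemma frag_nz:
  assumes "frag_kernel n l M M' \<noteq> 0"
  shows "\<exists>v a b c. v \<in># M \<and> M' = M - {#v#} + {#a,b,c#} \<and> a + b + c = v \<and> odd a \<and> odd b \<and> odd c"
proof -
  let ?ys = "ranked M"
  obtain i where i: "i \<in> {..<size M}" and
    t: "((real (?ys ! i) - 1) / (2 * real (n - l))) * (\<Sum>R \<in> {R. M - {#?ys ! i#} + R = M'}. mu (?ys ! i) R) \<noteq> 0"
    using assms unfolding frag_kernel_def Let_def by (rule sum.not_neutral_contains_not_neutral)
  then have "(\<Sum>R \<in> {R. M - {#?ys ! i#} + R = M'}. mu (?ys ! i) R) \<noteq> 0" by auto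
  then obtain R where R: "R \<in> {R. M - {#?ys ! i#} + R = M'}" and muR: "mu (?ys ! i) R \<noteq> 0"
    by (rule sum.not_neutral_contains_not_neutral)
  then have "(\<Sum>(a,b,c) \<in> {(a,b,c). a \<le> ?ys!i \<and> b \<le> ?ys!i \<and> c \<le> ?ys!i \<and> a + b + c = ?ys!i \<and> mset [a,b,c] = R}.
        hit_prob a * hit_prob b * hit_prob c) \<noteq> 0"
    unfolding mu_def by auto
  then obtain x where x: "x \<in> {(a,b,c). a \<le> ?ys!i \<and> b \<le> ?ys!i \<and> c \<le> ?ys!i \<and> a + b + c = ?ys!i \<and> mset [a,b,c] = R}"
     and hx: "(case x of (a,b,c) \<Rightarrow> hit_prob a * hit_prob b * hit_prob c) \<noteq> 0"
    by (rule sum.not_neutral_contains_not_neutral)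
  obtain a b c where abc: "x = (a,b,c)" by (cases x)
  have "odd a" "odd b" "odd c" using hx abc hp_odd by auto
  moreover have "?ys ! i \<in># M"
  proof -
    have "?ys ! i \<in> set ?ys" using i by simp
    then show ?thesis by (metis ranked_mset set_mset_mset)
  qed
  moreover have "M' = M - {#?ys ! i#} + {#a,b,c#}" "a + b + c = ?ys ! i" using R x abc by auto
  ultimately show ?thesis by blast
qed

lemma coal_nz:
  assumes "coal_kernel s s' \<noteq> 0"
  shows "\<exists>a b c. {#a,b,c#} \<subseteq># s \<and> s' = s - {#a,b,c#} + {#a+b+c#}"
proof -
  let ?xs = "ranked s"
  have "coal_rate s s' \<noteq> 0" using assms unfolding coal_kernel_def by auto
  then obtain x where x: "x \<in> {(i,j,k). i < j \<and> j < k \<and> k < size s \<and> coalesce ?xs i j k = s'}"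
    unfolding coal_rate_def Let_def by (rule sum.not_neutral_contains_not_neutral)
  obtain i j k where ijk: "x = (i,j,k)" by (cases x)
  have h: "i < j" "j < k" "k < size s" "coalesce ?xs i j k = s'" using x ijk by auto
  have "{#?xs!i, ?xs!j, ?xs!k#} \<subseteq># s" using sub3[of i ?xs j k] h by simp
  moreover have "s' = s - {#?xs!i, ?xs!j, ?xs!k#} + {#?xs!i + ?xs!j + ?xs!k#}"
    using h(4) unfolding coalesce_def by simp
  ultimately show ?thesis by blast
qed

lemma frag_main:
  fixes s :: "nat multiset"
  assumes T: "{#a,b,c#} \<subseteq># s" and pos: "a > 0" "b > 0" "c > 0"
    and y: "y = a + b + c" and s': "s' = s - {#a,b,c#} + {#y#}"
  shows "frag_kernel n l s' s = real (count s' y) * ((real y - 1) / (2 * real (n - l))) * mu y {#a,b,c#}"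
proof -
  let ?T = "{#a,b,c#}"
  let ?ys = "ranked s'"
  have inner: "(\<Sum>R \<in> {R. s' - {#?ys ! i#} + R = s}. mu (?ys ! i) R) = (if ?ys ! i = y then mu y ?T else 0)"
    if "i < size s'" for i
  proof (cases "?ys ! i = y")
    case True
    have "s' - {#y#} = s - ?T" using s' by simp
    moreover have "s - ?T + R = s \<longleftrightarrow> R = ?T" for R
    proof -
      have e: "s - ?T + ?T = s" by (rule subset_mset.diff_add[OF T])
      show ?thesis
      proof
        assume "s - ?T + R = s"
        then have "s - ?T + R = s - ?T + ?T" using e by simp
        then show "R = ?T" by (simp only: add_left_cancel)
      next
        assume "R = ?T" then show "s - ?T + R = s" using e by simp
      qed
    qed
    ultimately have "{R. s' - {#?ys ! i#} + R = s} = {?T}" using True by auto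
    then show ?thesis using True by simp
  next
    case False
    have "{R. s' - {#?ys ! i#} + R = s} = {}"
    proof (rule ccontr)
      assume "{R. s' - {#?ys ! i#} + R = s} \<noteq> {}"
      then obtain R where R: "s' - {#?ys ! i#} + R = s" by auto
      have "count (s' - {#?ys ! i#}) y \<le> count s y" using R by (metis count_union le_add1)
      moreover have "count (s' - {#?ys ! i#}) y = count s' y" using False by simp
      moreover have "count ?T y = 0" using pos y by auto
      moreover have "count s' y = count (s - ?T) y + 1" using s' by simp
      ultimately show False by simp
    qed
    then show ?thesis using False by simp
  qed
  have "frag_kernel n l s' s = (\<Sum>i < size s'. (if ?ys ! i = y then ((real y - 1) / (2 * real (n - l))) * mu y ?T else 0))"
    unfolding frag_kernel_def Let_def by (intro sum.cong refl) (auto simp: inner)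
  also have "\<dots> = (\<Sum>i \<in> {t. t < length ?ys \<and> ?ys ! t = y}. ((real y - 1) / (2 * real (n - l))) * mu y ?T)"
    by (subst sum.inter_filter[symmetric]) (auto intro: sum.cong)
  also have "\<dots> = real (count s' y) * (((real y - 1) / (2 * real (n - l))) * mu y ?T)"
    using card_idx[of ?ys y] by simp
  finally show ?thesis by (simp add: mult.assoc)
qed



lemma alg:
  fixes A P h3 Ds I Q k1 hy Dr cy ym1 y3 Nn W :: real
  assumes "Q > 0" "Ds > 0" "Dr > 0" "cy > 0" "W > 0" "k1 > 0"
    and e1: "6 * I * Dr = Nn * Ds" and e2: "y3 * W = 3 * ym1 * hy"
  shows "A * (P * h3) / Ds * (y3 * I / Q) = (A * k1 / Q) * (P * hy) / (Dr * cy) * (cy * (ym1 / (2 * k1)) * (Nn * h3 / W))"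
proof -
  have n: "Nn = 6 * I * Dr / Ds" using e1 assms by (simp add: field_simps)
  have h: "ym1 * hy = y3 * W / 3" using e2 by (simp add: field_simps)
  have "(A * k1 / Q) * (P * hy) / (Dr * cy) * (cy * (ym1 / (2 * k1)) * (Nn * h3 / W))
      = A * P * h3 * (ym1 * hy) * Nn / (2 * Q * Dr * W)"
    using assms by (simp add: field_simps)
  also have "\<dots> = A * P * h3 * (y3 * W / 3) * (6 * I * Dr / Ds) / (2 * Q * Dr * W)" by (simp add: n h)
  also have "\<dots> = A * (P * h3) / Ds * (y3 * I / Q)" using assms(1-6) by (simp add: field_simps)
  finally show ?thesis by simp
qed



definition valid :: "nat \<Rightarrow> nat \<Rightarrow> nat multiset \<Rightarrow> bool" where
  "valid n k s \<longleftrightarrow> size s = 2 * (n - k) + 1 \<and> sum_mset s = 2 * n + 1 \<and> (\<forall>x\<in>#s. odd x)"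

definition Ph :: "nat multiset \<Rightarrow> real" where
  "Ph s = prod_mset (image_mset hit_prob s)"

definition Qf :: "nat \<Rightarrow> nat \<Rightarrow> real" where
  "Qf n m = (real m - 1) * (real m - 2) * (real (2 * n + 1) + real m) / 2"

definition aa :: "nat \<Rightarrow> nat \<Rightarrow> real" where
  "aa n k = fact (2 * n + 1) * 2 ^ (2 * n + 1) * (\<Prod>i<k. real (Suc i) / Qf n (2 * (n - i) + 1))"

definition G :: "nat \<Rightarrow> nat \<Rightarrow> nat multiset \<Rightarrow> real" where
  "G n k s = (if valid n k s then aa n k * Ph s / real (Dm s) else 0)"

lemma total_alg: "((x::real) - 1) * (x - 2) / 2 * y + 3 * (x * (x - 1) * (x - 2) / 6) = (x - 1) * (x - 2) * (y + x) / 2"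
  by (simp add: field_simps)

lemma total_valid: "valid n k s \<Longrightarrow> coal_total_rate s = Qf n (size s)"
proof -
  assume "valid n k s"
  then have "sum_mset s = 2 * n + 1" unfolding valid_def by blast
  then have "coal_total_rate s = ((real (size s) - 1) * (real (size s) - 2) / 2) * real (2 * n + 1)
      + 3 * (real (size s) * (real (size s) - 1) * (real (size s) - 2) / 6)"
    by (simp only: total_rate)
  also have "\<dots> = Qf n (size s)" unfolding Qf_def by (rule total_alg)
  finally show ?thesis .
qed

lemma Qf_pos: "k < n \<Longrightarrow> Qf n (2 * (n - k) + 1) > 0"
  unfolding Qf_def by (simp add: of_nat_diff)

lemma aa_Suc: "aa n (Suc k) = aa n k * real (Suc k) / Qf n (2 * (n - k) + 1)"
  unfolding aa_def by simp

lemma step_invalid: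
  assumes k: "k < n" and False: "\<not> valid n k s"
  shows "G n (Suc k) s' * frag_kernel n (n - Suc k) s' s = 0"
  proof (rule ccontr)
    assume ne: "G n (Suc k) s' * frag_kernel n (n - Suc k) s' s \<noteq> 0"
    then have v': "valid n (Suc k) s'" and fnz: "frag_kernel n (n - Suc k) s' s \<noteq> 0"
      unfolding G_def by (auto split: if_splits)
    obtain v a b c where vabc: "v \<in># s'" "s = s' - {#v#} + {#a,b,c#}" "a + b + c = v" "odd a" "odd b" "odd c"
      using frag_nz[OF fnz] by blast
    have s'eq: "s' = add_mset v (s' - {#v#})" using vabc(1) by simp
    have "size s = size (s' - {#v#}) + 3" using vabc(2) by simp
    moreover have "size s' = size (s' - {#v#}) + 1" using s'eq by (metis size_add_mset Suc_eq_plus1)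
    ultimately have sz: "size s = 2 * (n - k) + 1" using v' k unfolding valid_def by simp
    have "sum_mset s = sum_mset (s' - {#v#}) + v" using vabc(2,3) by (simp add: add.assoc)
    moreover have "sum_mset s' = sum_mset (s' - {#v#}) + v" using s'eq by (metis sum_mset.add_mset add.commute)
    ultimately have sm: "sum_mset s = 2 * n + 1" using v' unfolding valid_def by simp
    have od: "\<forall>x\<in>#s. odd x"
    proof
      fix x assume "x \<in># s"
      then have "x \<in># s' - {#v#} \<or> x = a \<or> x = b \<or> x = c" using vabc(2) by auto
      then show "odd x" using v' vabc unfolding valid_def by (auto dest: in_diffD)
    qed
    have "valid n k s" using sz sm od unfolding valid_def by simp
    then show False using False by simp
  qed

lemma step_noA:
  assumes False: "\<not> (\<exists>a b c. {#a,b,c#} \<subseteq># s \<and> s' = s - {#a,b,c#} + {#a+b+c#})"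
  shows "frag_kernel n l s' s = 0"
    proof (rule ccontr)
      assume fnz: "frag_kernel n l s' s \<noteq> 0"
      obtain v a b c where vabc: "v \<in># s'" "s = s' - {#v#} + {#a,b,c#}" "a + b + c = v"
        using frag_nz[OF fnz] by blast
      have 1: "{#a,b,c#} \<subseteq># s" using vabc(2) by simp
      have 2: "s - {#a,b,c#} = s' - {#v#}" using vabc(2) by simp
      have 3: "s' - {#v#} + {#v#} = s'" using vabc(1) by simp
      have "s' = s - {#a,b,c#} + {#a+b+c#}" using 2 3 vabc(3) by simp
      then show False using False 1 by blast
    qed

lemma step_main:
  assumes k: "k < n" and vs: "valid n k s" and T: "{#a,b,c#} \<subseteq># s" and s': "s' = s - {#a,b,c#} + {#a+b+c#}"
  shows "G n k s * coal_kernel s s' = G n (Suc k) s' * frag_kernel n (n - Suc k) s' s"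
proof -
    define y where "y = a + b + c"
    let ?T = "{#a,b,c#}"
    have abc_in: "a \<in># s" "b \<in># s" "c \<in># s" using T by (auto dest: mset_subset_eqD)
    have odds: "odd a" "odd b" "odd c" using abc_in vs unfolding valid_def by auto
    then have pos: "a > 0" "b > 0" "c > 0" by (auto intro: odd_pos)
    have oy: "odd y" using odds unfolding y_def by simp
    have y3: "y \<ge> 3" using pos oy unfolding y_def by simp
    have posall: "\<forall>x\<in>#s. x > 0" using vs unfolding valid_def by (auto intro: odd_pos)
    have szT: "size ?T = 3" by simp
    have szs: "size s = 2 * (n - k) + 1" using vs unfolding valid_def by simp
    have sT: "s - ?T + ?T = s" by (rule subset_mset.diff_add[OF T])
    have sz_diff: "size (s - ?T) = size s - 3" using size_Diff_submset[OF T] szT by simp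
    have vs': "valid n (Suc k) s'"
    proof -
      have "size s' = size (s - ?T) + 1" unfolding s' by simp
      then have a1: "size s' = 2 * (n - Suc k) + 1" using szs k sz_diff by simp
      have c1: "sum_mset s = sum_mset (s - ?T) + sum_mset ?T"
        using sum_mset.union[of "s - ?T" ?T] unfolding sT .
      have c2: "sum_mset s' = sum_mset (s - ?T) + (a + b + c)" unfolding s' by simp
      have c3: "sum_mset s = 2 * n + 1" using vs unfolding valid_def by blast
      have c4: "sum_mset ?T = a + b + c" by simp
      have a2: "sum_mset s' = 2 * n + 1" using c1 c2 c3 c4 by linarith
      have a3: "\<forall>x\<in>#s'. odd x"
      proof
        fix x assume xs: "x \<in># s'"
        have "x = a + b + c \<or> x \<in># s - ?T" using xs unfolding s' by simp
        moreover have "odd x" if "x \<in># s - ?T"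
        proof -
          have "x \<in># s" using that by (rule in_diffD)
          then show ?thesis using vs unfolding valid_def by blast
        qed
        ultimately show "odd x" using oy unfolding y_def by blast
      qed
      show ?thesis using a1 a2 a3 unfolding valid_def by simp
    qed
    define IT where "IT = {(i,j,k). i < j \<and> j < k \<and> k < size s \<and> {#ranked s!i, ranked s!j, ranked s!k#} = ?T}"
    have cr: "coal_rate s s' = real (y + 3) * real (card IT)"
      unfolding s' IT_def y_def by (rule coal_rate_main[OF posall T])
    have coal: "coal_kernel s s' = real (y + 3) * real (card IT) / Qf n (2 * (n - k) + 1)"
      unfolding coal_kernel_def cr total_valid[OF vs] szs ..
    have nk: "n - (n - Suc k) = Suc k" using k by simp
    have frag: "frag_kernel n (n - Suc k) s' s = real (count s' y) * ((real y - 1) / (2 * real (Suc k))) * mu y ?T"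
      using frag_main[OF T pos y_def s'[folded y_def], of n "n - Suc k"] unfolding nk .
    have mu: "mu y ?T = real (card (NS y ?T)) * (hit_prob a * hit_prob b * hit_prob c) / Wd y"
      by (rule mu_main[OF y_def])
    have cm: "6 * card IT * Dm (s - ?T) = card (NS y ?T) * Dm s"
      unfolding IT_def y_def by (rule count_main[OF T])
    have Phs: "Ph s = Ph (s - ?T) * (hit_prob a * hit_prob b * hit_prob c)"
    proof -
      have "Ph s = Ph (s - ?T + ?T)" using sT by simp
      also have "\<dots> = Ph (s - ?T) * (hit_prob a * hit_prob b * hit_prob c)"
        unfolding Ph_def by (simp add: mult.assoc)
      finally show ?thesis .
    qed
    have Phs': "Ph s' = Ph (s - ?T) * hit_prob y" unfolding s' Ph_def y_def by simp
    have cnt: "count s' y = Suc (count (s - ?T) y)" unfolding s' y_def by simp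
    have Dms': "Dm s' = Dm (s - ?T) * count s' y"
      unfolding cnt unfolding s' y_def using Dm_add[of "a+b+c" "s - ?T"] by simp
    have Gk: "G n k s = aa n k * Ph s / real (Dm s)" using vs unfolding G_def by simp
    have Gk': "G n (Suc k) s' = (aa n k * real (Suc k) / Qf n (2 * (n - k) + 1)) * Ph s' / (real (Dm (s - ?T)) * real (count s' y))"
      using vs' unfolding G_def aa_Suc Dms' by simp
    have e1: "6 * real (card IT) * real (Dm (s - ?T)) = real (card (NS y ?T)) * real (Dm s)"
      using cm by (metis of_nat_mult of_nat_numeral)
    have e2: "(real y + 3) * Wd y = 3 * (real y - 1) * hit_prob y" by (rule Wd_rel[OF oy y3])
    show ?thesis
      unfolding Gk Gk' coal frag mu Phs Phs'
      apply (rule alg)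
      using Qf_pos[OF k] Dm_pos[of s] Dm_pos[of "s - ?T"] Wd_pos[OF oy y3] e1 e2 cnt
      by simp_all
qed




lemma step:
  assumes k: "k < n"
  shows "G n k s * coal_kernel s s' = G n (Suc k) s' * frag_kernel n (n - Suc k) s' s"
proof (cases "valid n k s")
  case False
  then show ?thesis using step_invalid[OF k False, of s'] unfolding G_def by simp
next
  case vs: True
  show ?thesis
  proof (cases "\<exists>a b c. {#a,b,c#} \<subseteq># s \<and> s' = s - {#a,b,c#} + {#a+b+c#}")
    case False
    have "coal_kernel s s' = 0" using coal_nz False by blast
    then show ?thesis using step_noA[OF False, of n "n - Suc k"] by simp
  next
    case True
    then obtain a b c where "{#a,b,c#} \<subseteq># s" "s' = s - {#a,b,c#} + {#a+b+c#}" by blast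
    then show ?thesis by (rule step_main[OF k vs])
  qed
qed

lemma sum_ge_size: "(\<forall>x\<in>#s. x \<ge> (1::nat)) \<Longrightarrow> sum_mset s = size s + sum_mset (image_mset (\<lambda>x. x - 1) s)"
  by (induction s) auto

lemma valid0: "valid n 0 s \<longleftrightarrow> s = replicate_mset (2 * n + 1) 1"
proof
  assume v: "valid n 0 s"
  then have od: "\<forall>x\<in>#s. odd x" and sz: "size s = 2 * n + 1" and sm: "sum_mset s = 2 * n + 1"
    unfolding valid_def by auto
  have ge: "\<forall>x\<in>#s. x \<ge> (1::nat)" using od by (auto simp: odd_pos Suc_le_eq)
  have "sum_mset (image_mset (\<lambda>x. x - 1) s) = 0" using sum_ge_size[OF ge] sz sm by simp
  then have "\<forall>x\<in>#s. x - 1 = 0" by simp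
  then have "set_mset s \<subseteq> {1}" using ge by force
  then have "s = replicate_mset (size s) 1" by (rule set_mset_subset_singletonD)
  then show "s = replicate_mset (2 * n + 1) 1" using sz by simp
next
  assume "s = replicate_mset (2 * n + 1) 1"
  then show "valid n 0 s" unfolding valid_def by simp
qed

lemma validn: "valid n n s \<longleftrightarrow> s = {#2 * n + 1#}"
proof
  assume v: "valid n n s"
  then have "size s = 1" unfolding valid_def by simp
  then obtain x where x: "s = {#x#}" using size_1_singleton_mset by blast
  then show "s = {#2 * n + 1#}" using v unfolding valid_def by simp
next
  assume "s = {#2 * n + 1#}"
  then show "valid n n s" unfolding valid_def by simp
qed

lemma prod_nmi: "(\<Prod>i<n. n - i) = fact n"
proof (induction n)
  case 0 then show ?case by simp
next
  case (Suc n)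
  have "(\<Prod>i<Suc n. Suc n - i) = Suc n * (\<Prod>i<n. Suc n - Suc i)"
    by (subst prod.lessThan_Suc_shift) simp
  then show ?case using Suc by simp
qed

lemma prod_odd: "2 ^ n * fact n * (\<Prod>i<n. 2 * (n - i) - 1) = (fact (2 * n) :: nat)"
proof (induction n)
  case 0 then show ?case by simp
next
  case (Suc n)
  have "(\<Prod>i<Suc n. 2 * (Suc n - i) - 1) = (2 * n + 1) * (\<Prod>i<n. 2 * (Suc n - Suc i) - 1)"
    by (subst prod.lessThan_Suc_shift) simp
  then have p: "(\<Prod>i<Suc n. 2 * (Suc n - i) - 1) = (2 * n + 1) * (\<Prod>i<n. 2 * (n - i) - 1)" by simp
  have f: "fact (2 * Suc n) = (2 * n + 2) * ((2 * n + 1) * fact (2 * n))"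
    by (simp add: algebra_simps)
  show ?case unfolding p f using Suc[symmetric] by (simp add: algebra_simps)
qed

lemma prod_top: "fact m * (\<Prod>i<n. m + n - i) = (fact (m + n) :: nat)"
proof (induction n)
  case 0 then show ?case by simp
next
  case (Suc n)
  have "(\<Prod>i<Suc n. m + Suc n - i) = (m + Suc n) * (\<Prod>i<n. m + Suc n - Suc i)"
    by (subst prod.lessThan_Suc_shift) simp
  then have "(\<Prod>i<Suc n. m + Suc n - i) = (m + Suc n) * (\<Prod>i<n. m + n - i)" by simp
  then show ?case using Suc by (simp add: algebra_simps)
qed

lemma endpoint: "aa n n * hit_prob (2 * n + 1) = 1"
proof -
  define N where "N = 2 * n + 1"
  define q where "q i = 2 * (n - i) * (2 * (n - i) - 1) * (n + 1 + (n - i))" for i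
  have Qq: "Qf n (2 * (n - i) + 1) = real (q i)" if "i < n" for i
  proof -
    define d where "d = n - i"
    have d1: "d \<ge> 1" using that unfolding d_def by simp
    have "real (q i) = real (2 * d) * real (2 * d - 1) * real (n + 1 + d)"
      unfolding q_def d_def by (simp only: of_nat_mult)
    also have "\<dots> = (2 * real d) * (2 * real d - 1) * (real n + 1 + real d)"
      using d1 by (simp add: of_nat_diff)
    also have "\<dots> = Qf n (2 * d + 1)"
      unfolding Qf_def by (simp add: algebra_simps)
    finally show ?thesis unfolding d_def by simp
  qed
  have PQ: "(\<Prod>i<n. q i) = 2 ^ n * fact n * (\<Prod>i<n. 2 * (n - i) - 1) * (\<Prod>i<n. (n + 1) + n - i)"
  proof -
    have "(\<Prod>i<n. q i) = (\<Prod>i<n. 2 * ((n - i) * ((2 * (n - i) - 1) * ((n + 1) + n - i))))"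
    proof (intro prod.cong refl)
      fix i assume "i \<in> {..<n}"
      then have "n + 1 + (n - i) = (n + 1) + n - i" by simp
      then show "q i = 2 * ((n - i) * ((2 * (n - i) - 1) * ((n + 1) + n - i)))"
        unfolding q_def by (simp only: mult.assoc)
    qed
    also have "\<dots> = 2 ^ n * ((\<Prod>i<n. n - i) * ((\<Prod>i<n. 2 * (n - i) - 1) * (\<Prod>i<n. (n + 1) + n - i)))"
      by (simp add: prod.distrib)
    finally show ?thesis using prod_nmi by (simp add: algebra_simps)
  qed
  have PQ2: "fact (n + 1) * (\<Prod>i<n. q i) = fact (2 * n) * fact (2 * n + 1)"
  proof -
    define A where "A = (\<Prod>i<n. 2 * (n - i) - 1)"
    define B where "B = (\<Prod>i<n. (n + 1) + n - i)"
    have "fact (n + 1) * (\<Prod>i<n. q i) = (2 ^ n * fact n * A) * (fact (n + 1) * B)"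
      unfolding PQ A_def[symmetric] B_def[symmetric] by (simp only: ac_simps)
    also have "2 ^ n * fact n * A = fact (2 * n)" unfolding A_def by (rule prod_odd)
    also have "fact (n + 1) * B = fact (2 * n + 1)"
    proof -
      have e: "n + 1 + n = 2 * n + 1" by simp
      show ?thesis unfolding B_def using prod_top[of "n + 1" n] unfolding e .
    qed
    finally show ?thesis .
  qed
  have binom: "fact n * fact (n + 1) * (N choose n) = fact N"
    using binomial_fact_lemma[of n N] unfolding N_def by simp
  have g: "N * gg 1 N = N choose n" unfolding N_def using gg1_closed[of n] by simp
  have fN: "fact N = N * fact (2 * n)" unfolding N_def by simp
  have key: "fact N * gg 1 N * fact n = (\<Prod>i<n. q i)"
  proof -
    have "fact (n + 1) * (fact N * gg 1 N * fact n) = fact (n + 1) * (fact (2 * n) * (N * gg 1 N) * fact n)"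
      using fN by (simp add: algebra_simps)
    also have "\<dots> = fact (2 * n) * (fact n * fact (n + 1) * (N choose n))" unfolding g by (simp add: algebra_simps)
    also have "\<dots> = fact (2 * n) * fact N" unfolding binom ..
    also have "\<dots> = fact (n + 1) * (\<Prod>i<n. q i)" using PQ2 unfolding N_def by simp
    finally show ?thesis by simp
  qed
  have qpos: "q i > 0" if "i < n" for i unfolding q_def using that by simp
  have QP: "(\<Prod>i<n. Qf n (2 * (n - i) + 1)) = (\<Prod>i<n. real (q i))"
    by (intro prod.cong refl) (use Qq in auto)
  have "aa n n = fact N * 2 ^ N * ((\<Prod>i<n. real (Suc i)) / (\<Prod>i<n. real (q i)))"
    unfolding aa_def N_def prod_dividef QP ..
  also have "(\<Prod>i<n. real (Suc i)) = fact n"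
    by (simp add: fact_prod_Suc atLeast0LessThan)
  finally have "aa n n * hit_prob N = fact N * fact n * real (gg 1 N) / (\<Prod>i<n. real (q i))"
    by (simp add: hit_prob_gg)
  also have "\<dots> = real (fact N * gg 1 N * fact n) / real (\<Prod>i<n. q i)"
    by (simp add: algebra_simps)
  also have "\<dots> = 1" unfolding key using qpos by (simp add: prod_pos)
  finally show ?thesis unfolding N_def .
qed

lemma G0: "G n 0 s = point_mass (replicate_mset (2 * n + 1) 1) s"
proof (cases "s = replicate_mset (2 * n + 1) 1")
  case True
  have D: "real (Dm s) = fact (2 * n + 1)" unfolding True Dm_def by simp
  have P: "Ph s = (1/2) ^ (2 * n + 1)"
    unfolding True Ph_def by (simp only: image_replicate_mset prod_mset_replicate_mset hp1)
  have V: "valid n 0 s" using True valid0 by simp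
  have "G n 0 s = fact (2 * n + 1) * 2 ^ (2 * n + 1) * (1/2) ^ (2 * n + 1) / fact (2 * n + 1)"
    unfolding G_def aa_def using V D P by simp
  also have "\<dots> = 1" by (simp add: power_one_over)
  finally show ?thesis using True unfolding point_mass_def by simp
next
  case False
  then show ?thesis using valid0 unfolding G_def point_mass_def by simp
qed

lemma Gn: "G n n s = point_mass {#2 * n + 1#} s"
proof (cases "s = {#2 * n + 1#}")
  case True
  have "Dm s = 1" unfolding True Dm_def by simp
  moreover have "Ph s = hit_prob (2 * n + 1)" unfolding True Ph_def by simp
  ultimately show ?thesis using True validn endpoint unfolding G_def point_mass_def by simp
next
  case False
  then show ?thesis using validn unfolding G_def point_mass_def by simp
qed




lemma telescope:
  assumes "j \<le> n"
  shows "G n 0 (xs!0) * (\<Prod>k<j. coal_kernel (xs!k) (xs!Suc k))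
       = G n j (xs!j) * (\<Prod>k<j. frag_kernel n (n - Suc k) (xs!Suc k) (xs!k))"
  using assms
proof (induction j)
  case 0
  then show ?case by simp
next
  case (Suc j)
  have "G n 0 (xs!0) * (\<Prod>k<Suc j. coal_kernel (xs!k) (xs!Suc k))
      = (G n 0 (xs!0) * (\<Prod>k<j. coal_kernel (xs!k) (xs!Suc k))) * coal_kernel (xs!j) (xs!Suc j)"
    by (simp add: mult.assoc)
  also have "\<dots> = (\<Prod>k<j. frag_kernel n (n - Suc k) (xs!Suc k) (xs!k)) * (G n j (xs!j) * coal_kernel (xs!j) (xs!Suc j))"
    using Suc by (simp add: ac_simps)
  also have "G n j (xs!j) * coal_kernel (xs!j) (xs!Suc j) = G n (Suc j) (xs!Suc j) * frag_kernel n (n - Suc j) (xs!Suc j) (xs!j)"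
    using Suc.prems by (intro step) simp
  finally show ?case by (simp add: ac_simps)
qed

theorem theorem3p1:
  fixes n :: nat and xs :: "nat multiset list"
  assumes "length xs = n + 1"
  shows "markov_path_prob (point_mass (replicate_mset (2 * n + 1) 1)) (\<lambda>_. coal_kernel) xs
       = markov_path_prob (point_mass {#2 * n + 1#}) (frag_kernel n) (rev xs)"
proof -
  have L: "markov_path_prob (point_mass (replicate_mset (2 * n + 1) 1)) (\<lambda>_. coal_kernel) xs
      = G n 0 (xs!0) * (\<Prod>k<n. coal_kernel (xs!k) (xs!Suc k))"
    unfolding markov_path_prob_def G0 using assms by simp
  have rv: "rev xs ! l = xs ! (n - l)" if "l \<le> n" for l
    using that assms by (simp add: rev_nth)
  have "(\<Prod>l<n. frag_kernel n l (rev xs ! l) (rev xs ! Suc l))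
      = (\<Prod>l<n. frag_kernel n l (xs ! (n - l)) (xs ! (n - Suc l)))"
    by (intro prod.cong refl) (simp add: rv)
  also have "\<dots> = (\<Prod>k<n. frag_kernel n (n - Suc k) (xs ! (n - (n - Suc k))) (xs ! (n - Suc (n - Suc k))))"
    by (rule prod.nat_diff_reindex[symmetric])
  also have "\<dots> = (\<Prod>k<n. frag_kernel n (n - Suc k) (xs ! Suc k) (xs ! k))"
    by (intro prod.cong refl) (simp add: Suc_diff_Suc)
  finally have R: "markov_path_prob (point_mass {#2 * n + 1#}) (frag_kernel n) (rev xs)
      = G n n (xs!n) * (\<Prod>k<n. frag_kernel n (n - Suc k) (xs ! Suc k) (xs ! k))"
    unfolding markov_path_prob_def Gn using assms rv[of 0] by simp
  show ?thesis unfolding L R by (rule telescope) simp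
qed


end
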